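(* If $\mathcal{N}$ is a sound, acyclic, weakly non-deterministic negotiation, then its restriction $\mathcal{N}_D$ to its deterministic processes is sound.
   Context: A negotiation is a tuple $\mathcal{N}=(\mathit{Proc},N,\mathit{dom},R,\delta)$ where $\mathit{Proc}$ is a finite set of processes, $N$ is a finite set of nodes, $\mathit{dom}:N\to 2^{\mathit{Proc}}\setminus\{\emptyset\}$, there are two distinguished nodes $n_{\mathit{init}},n_{\mathit{fin}}$ with $\mathit{dom}(n_{\mathit{init}})=\mathit{dom}(n_{\mathit{fin}})=\mathit{Proc}$, $R$ is a set of results, each node $n$ has a set $\mathit{out}(n)\subseteq R$ of results (nonempty for $n\neq n_{\mathit{fin}}$), and $\delta(n,a,p)\subseteq N$ is defined and nonempty exactly when $a\in\mathit{out}(n)$ and $p\in\mathit{dom}(n)$, with $p\in\mathit{dom}(n')$ for all $n'\in\delta(n,a,p)$. A configuration is a map $C$ assigning to each process a nonempty set of nodes; $C_{\mathit{init}}(p)=\{n_{\mathit{init}}\}$, $C_{\mathit{fin}}(p)=\{n_{\mathit{fin}}\}$. A node $n$ is enabled in $C$ if $n\in C(p)$ for all $p\in\mathit{dom}(n)$. If $n$ is enabled and $a\in\mathit{out}(n)$ then $C\xrightarrow{(n,a)}C'$ with $C'(p)=\delta(n,a,p)$ for $p\in\mathit{dom}(n)$, $C'(p)=C(p)$ otherwise. A run is a sequence of such steps; $\mathcal{N}$ is sound if every finite run from $C_{\mathit{init}}$ can be extended to a finite run ending in $C_{\mathit{fin}}$. The graph of $\mathcal{N}$ has vertex set $N$ and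 edges $n\to n'$ whenever $n'\in\delta(n,a,p)$ for some $a,p$; $\mathcal{N}$ is acyclic if this graph is. A process $p$ is deterministic if $\delta(n,a,p)$ is a singleton for all $n$ with $p\in\mathit{dom}(n)$ and $a\in\mathit{out}(n)$; $\mathcal{N}$ is weakly non-deterministic if every node has a deterministic process in its domain. The restriction of $\mathcal{N}$ to $\mathit{Proc}'\subseteq\mathit{Proc}$ is the negotiation $(\mathit{Proc}',N',\mathit{dom}',R,\delta')$ with $N'=\{n\in N:\mathit{dom}(n)\cap\mathit{Proc}'\neq\emptyset\}$, $\mathit{dom}'(n)=\mathit{dom}(n)\cap\mathit{Proc}'$, $\delta'(n,r,p)=\delta(n,r,p)\cap N'$; $\mathcal{N}_D$ is the restriction to the set of deterministic processes. *)

theory Defs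
  imports Main
begin

text \<open>The partial function delta is modelled as a total function
whose value is the empty set where delta is undefined.\<close>

record ('p, 'n, 'r) negotiation =
  Proc  :: "'p set"
  Nodes :: "'n set"
  dm    :: "'n \<Rightarrow> 'p set"
  Res   :: "'r set"
  out   :: "'n \<Rightarrow> 'r set"
  delta :: "'n \<Rightarrow> 'r \<Rightarrow> 'p \<Rightarrow> 'n set"
  ninit :: "'n"
  nfin  :: "'n"

definition is_negotiation :: "('p, 'n, 'r) negotiation \<Rightarrow> bool" where
  "is_negotiation \<N> \<longleftrightarrow>
     finite (Proc \<N>) \<and> finite (Nodes \<N>) \<and>
     (\<forall>n\<in>Nodes \<N>. dm \<N> n \<noteq> {} \<and> dm \<N> n \<subseteq> Proc \<N>) \<and>
     ninit \<N> \<in> Nodes \<N> \<and> nfin \<N> \<in> Nodes \<N> \<and>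
     dm \<N> (ninit \<N>) = Proc \<N> \<and> dm \<N> (nfin \<N>) = Proc \<N> \<and>
     (\<forall>n\<in>Nodes \<N>. out \<N> n \<subseteq> Res \<N>) \<and>
     (\<forall>n\<in>Nodes \<N>. n \<noteq> nfin \<N> \<longrightarrow> out \<N> n \<noteq> {}) \<and>
     (\<forall>n a p. n \<in> Nodes \<N> \<longrightarrow>
        (delta \<N> n a p \<noteq> {} \<longleftrightarrow> a \<in> out \<N> n \<and> p \<in> dm \<N> n)) \<and>
     (\<forall>n a p. n \<in> Nodes \<N> \<longrightarrow> a \<in> out \<N> n \<longrightarrow> p \<in> dm \<N> n \<longrightarrow>
        delta \<N> n a p \<subseteq> Nodes \<N> \<and> (\<forall>n'\<in>delta \<N> n a p. p \<in> dm \<N> n'))"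

text \<open>Configurations: maps from processes to sets of nodes; only the values on
Proc matter, and they are the empty set outside Proc.\<close>

definition C_init :: "('p, 'n, 'r) negotiation \<Rightarrow> 'p \<Rightarrow> 'n set" where
  "C_init \<N> = (\<lambda>p. if p \<in> Proc \<N> then {ninit \<N>} else {})"

definition C_fin :: "('p, 'n, 'r) negotiation \<Rightarrow> 'p \<Rightarrow> 'n set" where
  "C_fin \<N> = (\<lambda>p. if p \<in> Proc \<N> then {nfin \<N>} else {})"

definition enabled :: "('p, 'n, 'r) negotiation \<Rightarrow> ('p \<Rightarrow> 'n set) \<Rightarrow> 'n \<Rightarrow> bool" where
  "enabled \<N> C n \<longleftrightarrow> (\<forall>p\<in>dm \<N> n. n \<in> C p)"

definition step :: "('p, 'n, 'r) negotiation \<Rightarrow> ('p \<Rightarrow> 'n set) \<Rightarrow> 'n \<Rightarrow> 'r \<Rightarrow> ('p \<Rightarrow> 'n set) \<Rightarrow> bool" where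
  "step \<N> C n a C' \<longleftrightarrow> n \<in> Nodes \<N> \<and> enabled \<N> C n \<and> a \<in> out \<N> n \<and>
     C' = (\<lambda>p. if p \<in> dm \<N> n then delta \<N> n a p else C p)"

definition step_rel :: "('p, 'n, 'r) negotiation \<Rightarrow> ('p \<Rightarrow> 'n set) \<Rightarrow> ('p \<Rightarrow> 'n set) \<Rightarrow> bool" where
  "step_rel \<N> C C' \<longleftrightarrow> (\<exists>n a. step \<N> C n a C')"

abbreviation reach :: "('p, 'n, 'r) negotiation \<Rightarrow> ('p \<Rightarrow> 'n set) \<Rightarrow> ('p \<Rightarrow> 'n set) \<Rightarrow> bool" where
  "reach \<N> \<equiv> (step_rel \<N>)\<^sup>*\<^sup>*"

definition sound :: "('p, 'n, 'r) negotiation \<Rightarrow> bool" where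
  "sound \<N> \<longleftrightarrow> (\<forall>C. reach \<N> (C_init \<N>) C \<longrightarrow> reach \<N> C (C_fin \<N>))"

definition graph :: "('p, 'n, 'r) negotiation \<Rightarrow> ('n \<times> 'n) set" where
  "graph \<N> = {(n, n'). n \<in> Nodes \<N> \<and> (\<exists>a p. n' \<in> delta \<N> n a p)}"

definition acyclic_neg :: "('p, 'n, 'r) negotiation \<Rightarrow> bool" where
  "acyclic_neg \<N> \<longleftrightarrow> acyclic (graph \<N>)"

definition deterministic :: "('p, 'n, 'r) negotiation \<Rightarrow> 'p \<Rightarrow> bool" where
  "deterministic \<N> p \<longleftrightarrow>
     (\<forall>n\<in>Nodes \<N>. p \<in> dm \<N> n \<longrightarrow> (\<forall>a\<in>out \<N> n. \<exists>n'. delta \<N> n a p = {n'}))"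

definition weakly_nondet :: "('p, 'n, 'r) negotiation \<Rightarrow> bool" where
  "weakly_nondet \<N> \<longleftrightarrow> (\<forall>n\<in>Nodes \<N>. \<exists>p\<in>dm \<N> n. deterministic \<N> p)"

definition restrict_neg :: "('p, 'n, 'r) negotiation \<Rightarrow> 'p set \<Rightarrow> ('p, 'n, 'r) negotiation" where
  "restrict_neg \<N> P =
     (let N' = {n \<in> Nodes \<N>. dm \<N> n \<inter> P \<noteq> {}} in
      \<lparr> Proc = P, Nodes = N', dm = (\<lambda>n. dm \<N> n \<inter> P), Res = Res \<N>, out = out \<N>,
        delta = (\<lambda>n r p. delta \<N> n r p \<inter> N'), ninit = ninit \<N>, nfin = nfin \<N> \<rparr>)"

definition det_procs :: "('p, 'n, 'r) negotiation \<Rightarrow> 'p set" where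
  "det_procs \<N> = {p \<in> Proc \<N>. deterministic \<N> p}"

definition restrict_D :: "('p, 'n, 'r) negotiation \<Rightarrow> ('p, 'n, 'r) negotiation" where
  "restrict_D \<N> = restrict_neg \<N> (det_procs \<N>)"

end

theory Submission
  imports Defs
begin


inductive runs :: "('p, 'n, 'r) negotiation \<Rightarrow> ('p \<Rightarrow> 'n set) \<Rightarrow> ('n \<times> 'r) list \<Rightarrow> ('p \<Rightarrow> 'n set) \<Rightarrow> bool"
  for M where
  rNil: "runs M C [] C"
| rCons: "step M C n a C' \<Longrightarrow> runs M C' es C'' \<Longrightarrow> runs M C ((n, a) # es) C''"

lemma runs_reach: "runs M C es C' \<Longrightarrow> reach M C C'"
  by (induction rule: runs.induct) (auto simp: step_rel_def intro: converse_rtranclp_into_rtranclp)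

lemma reach_runs: "reach M C C' \<Longrightarrow> \<exists>es. runs M C es C'"
proof (induction rule: converse_rtranclp_induct)
  case base
  then show ?case by (auto intro: rNil)
next
  case (step y z)
  then show ?case by (auto simp: step_rel_def intro: rCons)
qed

lemma runs_append: "runs M C (xs @ ys) C'' \<longleftrightarrow> (\<exists>C'. runs M C xs C' \<and> runs M C' ys C'')"
proof (induction xs arbitrary: C)
  case Nil
  then show ?case by (auto intro: rNil elim: runs.cases)
next
  case (Cons x xs)
  obtain n a where x: "x = (n, a)" by (cases x)
  show ?case
  proof
    assume "runs M C ((x # xs) @ ys) C''"
    then obtain C1 where "step M C n a C1" "runs M C1 (xs @ ys) C''"
      using x by (auto elim: runs.cases)
    then show "\<exists>C'. runs M C (x # xs) C' \<and> runs M C' ys C''"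
      using Cons x by (auto intro: rCons)
  next
    assume "\<exists>C'. runs M C (x # xs) C' \<and> runs M C' ys C''"
    then obtain C' C1 where "step M C n a C1" "runs M C1 xs C'" "runs M C' ys C''"
      using x by (auto elim: runs.cases)
    then show "runs M C ((x # xs) @ ys) C''"
      using Cons x by (auto intro: rCons)
  qed
qed

lemma runs_snoc: "runs M C (xs @ [(n, a)]) C'' \<longleftrightarrow> (\<exists>C'. runs M C xs C' \<and> step M C' n a C'')"
  unfolding runs_append
  by (auto intro: rCons rNil elim: runs.cases)

lemma step_det: "step M C n a C1 \<Longrightarrow> step M C n a C2 \<Longrightarrow> C1 = C2"
  by (simp add: step_def)

lemma runs_mem: "runs M C es C' \<Longrightarrow> (n, a) \<in> set es \<Longrightarrow> n \<in> Nodes M \<and> a \<in> out M n"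
  by (induction rule: runs.induct) (auto simp: step_def)

lemma pos_lemma:
  "runs M C es C' \<Longrightarrow> C' p = {x} \<Longrightarrow>
   C p = {x} \<or> (\<exists>n a. (n, a) \<in> set es \<and> p \<in> dm M n \<and> delta M n a p = {x})"
proof (induction rule: runs.induct)
  case (rNil C)
  then show ?case by simp
next
  case (rCons C n a C' es C'')
  then show ?case by (auto simp: step_def split: if_splits)
qed

definition cons :: "('n \<times> 'r) list \<Rightarrow> ('n \<times> 'r) list \<Rightarrow> bool" where
  "cons \<sigma> es \<longleftrightarrow> (\<forall>m b b'. (m, b) \<in> set es \<longrightarrow> (m, b') \<in> set \<sigma> \<longrightarrow> b = b')"

locale detneg =
  fixes M :: "('p, 'n, 'r) negotiation"
  assumes dm_ne: "n \<in> Nodes M \<Longrightarrow> dm M n \<noteq> {}"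
    and dm_sub: "n \<in> Nodes M \<Longrightarrow> dm M n \<subseteq> Proc M"
    and det: "n \<in> Nodes M \<Longrightarrow> p \<in> dm M n \<Longrightarrow> a \<in> out M n \<Longrightarrow> \<exists>x. delta M n a p = {x} \<and> x \<in> Nodes M"
    and acyc: "acyclic (graph M)"
    and fin: "finite (Nodes M)"
begin

definition good :: "('p \<Rightarrow> 'n set) \<Rightarrow> bool" where
  "good C \<longleftrightarrow> (\<forall>p\<in>Proc M. \<exists>x. C p = {x})"

lemma step_good: "step M C n a C' \<Longrightarrow> good C \<Longrightarrow> good C'"
  unfolding good_def step_def using det by fastforce

lemma runs_good: "runs M C es C' \<Longrightarrow> good C \<Longrightarrow> good C'"
  by (induction rule: runs.induct) (auto intro: step_good)

lemma enabled_pos: "step M C n a C' \<Longrightarrow> good C \<Longrightarrow> p \<in> dm M n \<Longrightarrow> C p = {n}"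
  unfolding good_def step_def enabled_def using dm_sub by fastforce

lemma step_edge: "step M C n a C' \<Longrightarrow> p \<in> dm M n \<Longrightarrow> C' p = {y} \<Longrightarrow> (n, y) \<in> graph M"
  unfolding step_def graph_def by auto

lemma step_other: "step M C n a C' \<Longrightarrow> p \<notin> dm M n \<Longrightarrow> C' p = C p"
  unfolding step_def by auto

lemma forward_end:
  "runs M C es C' \<Longrightarrow> good C \<Longrightarrow> p \<in> Proc M \<Longrightarrow> C p = {x} \<Longrightarrow> C' p = {z} \<Longrightarrow> (x, z) \<in> (graph M)\<^sup>*"
proof (induction arbitrary: x rule: runs.induct)
  case (rNil C)
  then show ?case by simp
next
  case (rCons C n a C1 es C'')
  have g1: "good C1" using rCons step_good by blast
  obtain y where y: "C1 p = {y}" using g1 rCons.prems unfolding good_def by blast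
  have "(y, z) \<in> (graph M)\<^sup>*" using rCons.IH[OF g1 rCons.prems(2) y rCons.prems(4)] .
  moreover have "(x, y) \<in> (graph M)\<^sup>*"
  proof (cases "p \<in> dm M n")
    case True
    then have "C p = {n}" using enabled_pos rCons by blast
    then have "x = n" using rCons.prems by simp
    then show ?thesis using step_edge[OF rCons.hyps(1) True y] by simp
  next
    case False
    then show ?thesis using step_other[OF rCons.hyps(1) False] y rCons.prems by simp
  qed
  ultimately show ?case by simp
qed

lemma forward_ev:
  "runs M C es C' \<Longrightarrow> good C \<Longrightarrow> p \<in> Proc M \<Longrightarrow> C p = {x} \<Longrightarrow> (n, a) \<in> set es \<Longrightarrow> p \<in> dm M n
   \<Longrightarrow> (x, n) \<in> (graph M)\<^sup>*"
proof (induction arbitrary: x rule: runs.induct)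
  case (rNil C)
  then show ?case by simp
next
  case (rCons C n0 a0 C1 es C'')
  have g1: "good C1" using rCons step_good by blast
  obtain y where y: "C1 p = {y}" using g1 rCons.prems unfolding good_def by blast
  show ?case
  proof (cases "p \<in> dm M n0")
    case True
    then have "C p = {n0}" using enabled_pos rCons by blast
    then have xn: "x = n0" using rCons.prems by simp
    show ?thesis
    proof (cases "(n, a) = (n0, a0)")
      case True
      then show ?thesis using xn by simp
    next
      case False
      then have "(n, a) \<in> set es" using rCons.prems(4) by (metis set_ConsD)
      then have "(y, n) \<in> (graph M)\<^sup>*" using rCons.IH[OF g1 rCons.prems(2) y] rCons.prems by blast
      then show ?thesis using step_edge[OF rCons.hyps(1) True y] xn
        by (meson converse_rtrancl_into_rtrancl)
    qed
  next
    case False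
    then have "(n, a) \<in> set es" using rCons.prems by auto
    then show ?thesis
      using rCons.IH[OF g1 rCons.prems(2)] step_other[OF rCons.hyps(1) False] rCons.prems by simp
  qed
qed

lemma no_cycle: "(x, y) \<in> graph M \<Longrightarrow> (y, x) \<in> (graph M)\<^sup>* \<Longrightarrow> False"
  using acyc unfolding acyclic_def
  by (meson rtrancl_into_trancl2)

lemma distinct_runs: "runs M C es C' \<Longrightarrow> good C \<Longrightarrow> distinct (map fst es)"
proof (induction rule: runs.induct)
  case (rNil C)
  then show ?case by simp
next
  case (rCons C n a C1 es C'')
  have g1: "good C1" using rCons step_good by blast
  have nN: "n \<in> Nodes M" using rCons.hyps(1) unfolding step_def by simp
  obtain p where p: "p \<in> dm M n" using dm_ne[OF nN] by blast
  have pP: "p \<in> Proc M" using p dm_sub nN by blast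
  obtain y where y: "C1 p = {y}" using g1 pP unfolding good_def by blast
  have e: "(n, y) \<in> graph M" using step_edge[OF rCons.hyps(1) p y] .
  have "n \<notin> fst ` set es"
  proof
    assume "n \<in> fst ` set es"
    then obtain a' where "(n, a') \<in> set es" by force
    then have "(y, n) \<in> (graph M)\<^sup>*" using forward_ev[OF rCons.hyps(2) g1 pP y] p by blast
    then show False using no_cycle e by blast
  qed
  then show ?case using rCons.IH g1 by simp
qed

lemma no_return: "step M C n a C' \<Longrightarrow> good C \<Longrightarrow> runs M C' es C \<Longrightarrow> False"
proof -
  assume s: "step M C n a C'" and g: "good C" and r: "runs M C' es C"
  have g1: "good C'" using s g step_good by blast
  have nN: "n \<in> Nodes M" using s unfolding step_def by simp
  obtain p where p: "p \<in> dm M n" using dm_ne[OF nN] by blast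
  have pP: "p \<in> Proc M" using p dm_sub nN by blast
  obtain y where y: "C' p = {y}" using g1 pP unfolding good_def by blast
  have e: "(n, y) \<in> graph M" using step_edge[OF s p y] .
  have "C p = {n}" using enabled_pos s g p by blast
  then have "(y, n) \<in> (graph M)\<^sup>*" using forward_end[OF r g1 pP y] by blast
  then show False using no_cycle e by blast
qed

lemma visit_lemma:
  "runs M C es C' \<Longrightarrow> good C \<Longrightarrow> p \<in> Proc M \<Longrightarrow>
   (C p = {x} \<or> (\<exists>n a. (n, a) \<in> set es \<and> p \<in> dm M n \<and> delta M n a p = {x})) \<Longrightarrow>
   C' p \<noteq> {x} \<Longrightarrow> \<exists>a. (x, a) \<in> set es"
proof (induction rule: runs.induct)
  case (rNil C)
  then show ?case by simp
next
  case (rCons C n a C1 es C'')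
  have g1: "good C1" using rCons step_good by blast
  show ?case
  proof (cases "n = x")
    case True
    then show ?thesis by auto
  next
    case False
    have "C1 p = {x} \<or> (\<exists>n a. (n, a) \<in> set es \<and> p \<in> dm M n \<and> delta M n a p = {x})"
    proof (cases "C p = {x}")
      case True
      have "p \<notin> dm M n"
      proof
        assume "p \<in> dm M n"
        then have "C p = {n}" using enabled_pos rCons by blast
        then show False using True False by simp
      qed
      then show ?thesis using step_other[OF rCons.hyps(1)] True by simp
    next
      case nt: False
      then obtain n' a' where ev: "(n', a') \<in> set ((n, a) # es)" "p \<in> dm M n'" "delta M n' a' p = {x}"
        using rCons.prems by blast
      show ?thesis
      proof (cases "(n', a') = (n, a)")
        case True
        then show ?thesis using ev rCons.hyps(1) unfolding step_def by auto
      next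
        case False
        then show ?thesis using ev by auto
      qed
    qed
    then show ?thesis using rCons.IH[OF g1 rCons.prems(2)] rCons.prems(4) by auto
  qed
qed

lemma commute:
  "runs M C0 t1 C1 \<Longrightarrow> good C0 \<Longrightarrow> m \<notin> fst ` set t1 \<Longrightarrow> step M C1 m b C2 \<Longrightarrow> enabled M C0 m \<Longrightarrow>
   \<exists>C0'. step M C0 m b C0' \<and> runs M C0' t1 C2"
proof (induction arbitrary: C2 rule: runs.induct)
  case (rNil C)
  have "runs M C2 [] C2" by (rule runs.rNil)
  with rNil show ?case by (intro exI[of _ C2] conjI) simp_all
next
  case (rCons C0 n a Cx t1 C1)
  have gx: "good Cx" using rCons step_good by blast
  have disj: "dm M n \<inter> dm M m = {}"
  proof (rule ccontr)
    assume "dm M n \<inter> dm M m \<noteq> {}"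
    then obtain p where p: "p \<in> dm M n" "p \<in> dm M m" by blast
    have "C0 p = {n}" using enabled_pos rCons.hyps(1) rCons.prems(1) p(1) by blast
    moreover have "m \<in> C0 p" using rCons.prems(4) p(2) unfolding enabled_def by blast
    ultimately show False using rCons.prems(2) by simp
  qed
  have enx: "enabled M Cx m"
    using rCons.prems(4) disj step_other[OF rCons.hyps(1)] unfolding enabled_def by auto
  obtain Cx' where ih: "step M Cx m b Cx'" "runs M Cx' t1 C2"
    using rCons.IH[OF gx _ rCons.prems(3) enx] rCons.prems(2) by auto
  define C0' where "C0' = (\<lambda>p. if p \<in> dm M m then delta M m b p else C0 p)"
  have s1: "step M C0 m b C0'"
    using ih(1) rCons.prems(4) unfolding step_def C0'_def by simp
  have s2: "step M C0' n a Cx'"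
  proof -
    have "enabled M C0' n"
      using rCons.hyps(1) disj unfolding step_def enabled_def C0'_def by auto
    moreover have "Cx' = (\<lambda>p. if p \<in> dm M n then delta M n a p else C0' p)"
      using ih(1) rCons.hyps(1) disj unfolding step_def C0'_def by (auto simp: fun_eq_iff)
    ultimately show ?thesis using rCons.hyps(1) unfolding step_def by simp
  qed
  have "runs M C0' ((n, a) # t1) C2" by (rule runs.rCons[OF s2 ih(2)])
  with s1 show ?case by (intro exI[of _ C0'] conjI)
qed

lemma lemma_L:
  "runs M C0 \<sigma> C \<Longrightarrow> runs M C0 \<tau> E \<Longrightarrow> good C0 \<Longrightarrow> set \<sigma> \<subseteq> set \<tau> \<Longrightarrow> reach M C E"
proof (induction arbitrary: \<tau> rule: runs.induct)
  case (rNil C)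
  then show ?case using runs_reach by blast
next
  case (rCons C0 m b C0' \<sigma> C)
  have g': "good C0'" using rCons step_good by blast
  have "(m, b) \<in> set \<tau>" using rCons.prems by simp
  then obtain t1 t2 where tau: "\<tau> = t1 @ (m, b) # t2" by (meson split_list)
  obtain C1 C2 where r1: "runs M C0 t1 C1" and s: "step M C1 m b C2" and r2: "runs M C2 t2 E"
    using rCons.prems(1) unfolding tau runs_append by (auto elim: runs.cases)
  have dt: "distinct (map fst \<tau>)" using distinct_runs rCons.prems by blast
  have mt1: "m \<notin> fst ` set t1" using dt tau by auto
  have en: "enabled M C0 m" using rCons.hyps(1) unfolding step_def by simp
  obtain C0'' where c: "step M C0 m b C0''" "runs M C0'' t1 C2"
    using commute[OF r1 rCons.prems(2) mt1 s en] by blast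
  have "C0'' = C0'" by (rule step_det[OF c(1) rCons.hyps(1)])
  then have r': "runs M C0' (t1 @ t2) E" using c(2) r2 runs_append by blast
  have ds: "distinct (map fst ((m, b) # \<sigma>))" using distinct_runs[OF runs.rCons[OF rCons.hyps] rCons.prems(2)] .
  then have "(m, b) \<notin> set \<sigma>" by force
  then have "set \<sigma> \<subseteq> set (t1 @ t2)" using rCons.prems(3) tau by auto
  then show ?case using rCons.IH[OF r' g'] by blast
qed

lemma good_init: "good (C_init M)"
  unfolding good_def C_init_def by simp

lemma lemma_B:
  assumes "runs M (C_init M) \<sigma> C" "runs M (C_init M) \<tau> (C_fin M)" "cons \<sigma> \<tau>" "out M (nfin M) = {}"
  shows "set \<sigma> \<subseteq> set \<tau>"
  using assms
proof (induction \<sigma> arbitrary: C rule: rev_induct)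
  case Nil
  then show ?case by simp
next
  case (snoc e \<sigma>0)
  obtain m b where e: "e = (m, b)" by (cases e)
  obtain C0 where r0: "runs M (C_init M) \<sigma>0 C0" and s: "step M C0 m b C"
    using snoc.prems(1) unfolding e runs_snoc by blast
  have c0: "cons \<sigma>0 \<tau>" using snoc.prems(3) unfolding cons_def by auto
  have IH: "set \<sigma>0 \<subseteq> set \<tau>" using snoc.IH[OF r0 snoc.prems(2) c0 snoc.prems(4)] .
  have mN: "m \<in> Nodes M" and bo: "b \<in> out M m" using s unfolding step_def by auto
  have mf: "m \<noteq> nfin M" using bo snoc.prems(4) by auto
  obtain p where p: "p \<in> dm M m" using dm_ne[OF mN] by blast
  have pP: "p \<in> Proc M" using p dm_sub mN by blast
  have g0: "good C0" using runs_good r0 good_init by blast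
  have "C0 p = {m}" using enabled_pos s g0 p by blast
  from pos_lemma[OF r0 this]
  have h1: "C_init M p = {m} \<or> (\<exists>n a. (n, a) \<in> set \<sigma>0 \<and> p \<in> dm M n \<and> delta M n a p = {m})" .
  have h2: "C_init M p = {m} \<or> (\<exists>n a. (n, a) \<in> set \<tau> \<and> p \<in> dm M n \<and> delta M n a p = {m})"
    using h1 IH by auto
  have h3: "C_fin M p \<noteq> {m}" using pP mf unfolding C_fin_def by simp
  obtain a where ma: "(m, a) \<in> set \<tau>"
    using visit_lemma[OF snoc.prems(2) good_init pP h2 h3] by blast
  have "(m, b) \<in> set (\<sigma>0 @ [e])" using e by simp
  then have "a = b" using snoc.prems(3) ma unfolding cons_def by blast
  then show ?case using IH \<open>(m, a) \<in> set \<tau>\<close> e by simp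
qed

end



lemma negD:
  assumes "is_negotiation N"
  shows "finite (Proc N)" "finite (Nodes N)"
   "\<And>n. n\<in>Nodes N \<Longrightarrow> dm N n \<noteq> {}" "\<And>n. n\<in>Nodes N \<Longrightarrow> dm N n \<subseteq> Proc N"
   "ninit N \<in> Nodes N" "nfin N \<in> Nodes N"
   "dm N (ninit N) = Proc N" "dm N (nfin N) = Proc N"
   "\<And>n a p. n \<in> Nodes N \<Longrightarrow> a \<in> out N n \<Longrightarrow> p \<in> dm N n \<Longrightarrow> delta N n a p \<subseteq> Nodes N"
  using assms unfolding is_negotiation_def by simp_all

lemma M_Nodes_gen: "(\<And>n. n \<in> Nodes N \<Longrightarrow> dm N n \<inter> det_procs N \<noteq> {}) \<Longrightarrow> Nodes (restrict_D N) = Nodes N"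
  unfolding restrict_D_def restrict_neg_def Let_def by auto
lemma M_simps_gen: "Proc (restrict_D N) = det_procs N" "dm (restrict_D N) n = dm N n \<inter> det_procs N" "out (restrict_D N) = out N"
  "delta (restrict_D N) n a p = delta N n a p \<inter> Nodes (restrict_D N)" "ninit (restrict_D N) = ninit N" "nfin (restrict_D N) = nfin N"
  unfolding restrict_D_def restrict_neg_def Let_def by simp_all
lemma has_det_gen: "weakly_nondet N \<Longrightarrow> (\<And>n. n\<in>Nodes N \<Longrightarrow> dm N n \<subseteq> Proc N) \<Longrightarrow> n \<in> Nodes N \<Longrightarrow> dm N n \<inter> det_procs N \<noteq> {}"
  unfolding weakly_nondet_def det_procs_def by blast

locale sndneg =
  fixes N :: "('p, 'n, 'r) negotiation"
  assumes neg: "is_negotiation N"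
    and snd: "sound N"
    and acn: "acyclic_neg N"
    and wnd: "weakly_nondet N"
begin

abbreviation "D \<equiv> det_procs N"
abbreviation "M \<equiv> restrict_D N"

definition proj :: "('p \<Rightarrow> 'n set) \<Rightarrow> 'p \<Rightarrow> 'n set" where
  "proj C = (\<lambda>p. if p \<in> D then C p else {})"

lemma dm_proc: "n \<in> Nodes N \<Longrightarrow> dm N n \<subseteq> Proc N"
  using negD(4)[OF neg] .

lemma has_det: "n \<in> Nodes N \<Longrightarrow> dm N n \<inter> D \<noteq> {}"
  using has_det_gen[OF wnd dm_proc] .

lemma M_Nodes: "Nodes M = Nodes N"
  using M_Nodes_gen has_det by blast

lemma M_simps: "Proc M = D" "dm M n = dm N n \<inter> D" "out M = out N"
  "delta M n a p = delta N n a p \<inter> Nodes N" "ninit M = ninit N" "nfin M = nfin N"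
  using M_simps_gen[of N] M_Nodes by simp_all

lemma delta_sub: "n \<in> Nodes N \<Longrightarrow> a \<in> out N n \<Longrightarrow> p \<in> dm N n \<Longrightarrow> delta N n a p \<subseteq> Nodes N"
  using negD(9)[OF neg] .

lemma detM: "detneg M"
proof
  fix n assume "n \<in> Nodes M"
  then show "dm M n \<noteq> {}" using has_det M_Nodes M_simps by simp
next
  fix n assume "n \<in> Nodes M"
  then show "dm M n \<subseteq> Proc M" using M_simps by auto
next
  fix n p a assume n: "n \<in> Nodes M" and p: "p \<in> dm M n" and a: "a \<in> out M n"
  have nN: "n \<in> Nodes N" using n M_Nodes by simp
  have pD: "p \<in> D" and pn: "p \<in> dm N n" using p M_simps by auto
  have aN: "a \<in> out N n" using a M_simps by simp
  obtain x where x: "delta N n a p = {x}"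
    using pD nN pn aN unfolding det_procs_def deterministic_def by blast
  have "x \<in> Nodes N" using delta_sub[OF nN aN pn] x by simp
  then show "\<exists>x. delta M n a p = {x} \<and> x \<in> Nodes M" using x M_simps M_Nodes by auto
next
  have "graph M \<subseteq> graph N" unfolding graph_def using M_simps M_Nodes by auto
  then show "acyclic (graph M)" using acn acyclic_subset unfolding acyclic_neg_def by blast
next
  show "finite (Nodes M)" using negD(2)[OF neg] M_Nodes by simp
qed

lemma proj_step: "step N C n a C' \<Longrightarrow> step M (proj C) n a (proj C')"
proof -
  assume s: "step N C n a C'"
  have nN: "n \<in> Nodes N" and en: "enabled N C n" and aN: "a \<in> out N n"
    and C': "C' = (\<lambda>p. if p \<in> dm N n then delta N n a p else C p)"
    using s unfolding step_def by auto
  have "proj C' = (\<lambda>p. if p \<in> dm M n then delta M n a p else proj C p)"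
    using delta_sub[OF nN aN] unfolding C' proj_def M_simps by (auto simp: fun_eq_iff Int_absorb2)
  moreover have "enabled M (proj C) n"
    using en unfolding enabled_def proj_def M_simps by auto
  ultimately show ?thesis using nN aN unfolding step_def M_Nodes M_simps by simp
qed

lemma proj_runs: "runs N C es C' \<Longrightarrow> runs M (proj C) es (proj C')"
  by (induction rule: runs.induct) (auto intro: runs.intros proj_step)

lemma proj_init: "proj (C_init N) = C_init M"
  unfolding proj_def C_init_def M_simps det_procs_def by (auto simp: fun_eq_iff)

lemma proj_fin: "proj (C_fin N) = C_fin M"
  unfolding proj_def C_fin_def M_simps det_procs_def by (auto simp: fun_eq_iff)

lemma out_fin: "out N (nfin N) = {}"
proof (rule ccontr)
  assume "out N (nfin N) \<noteq> {}"
  then obtain a where a: "a \<in> out N (nfin N)" by blast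
  have fN: "nfin N \<in> Nodes N" and dmf: "dm N (nfin N) = Proc N"
    using negD(6,8)[OF neg] by auto
  define C' where "C' = (\<lambda>p. if p \<in> dm N (nfin N) then delta N (nfin N) a p else C_fin N p)"
  have s: "step N (C_fin N) (nfin N) a C'"
    using fN a dmf unfolding step_def enabled_def C'_def C_fin_def by auto
  have r0: "reach N (C_init N) (C_fin N)" using snd unfolding sound_def by blast
  have "reach N (C_init N) C'"
    using r0 s by (meson rtranclp.rtrancl_into_rtrancl step_rel_def)
  then have "reach N C' (C_fin N)" using snd unfolding sound_def by blast
  then obtain es where "runs N C' es (C_fin N)" using reach_runs by blast
  then have r: "runs M (proj C') es (C_fin M)" using proj_runs proj_fin by metis
  have s': "step M (C_fin M) (nfin N) a (proj C')" using proj_step[OF s] proj_fin by simp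
  have g: "detneg.good M (C_fin M)"
    unfolding detneg.good_def[OF detM] C_fin_def by auto
  show False using detneg.no_return[OF detM s' g r] .
qed

lemma lemma_A:
  assumes sig_out: "\<forall>(m, b)\<in>set \<sigma>. b \<in> out N m" and sig_d: "distinct (map fst \<sigma>)"
    and r: "runs N (C_init N) es C"
  shows "\<exists>es'. runs N C es' (C_fin N) \<and> cons \<sigma> es'"
  using r
proof (induction "card (Nodes N) - length es" arbitrary: es C rule: less_induct)
  case less
  show ?case
  proof (cases "C = C_fin N")
    case True
    then show ?thesis by (auto intro: runs.rNil simp: cons_def)
  next
    case False
    have "reach N (C_init N) C" using runs_reach less.prems by blast
    then have "reach N C (C_fin N)" using snd unfolding sound_def by blast
    then obtain C1 where "step_rel N C C1" using False by (metis converse_rtranclpE)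
    then obtain m b C1 where s: "step N C m b C1" unfolding step_rel_def by blast
    define b' where "b' = (if \<exists>b. (m, b) \<in> set \<sigma> then (SOME b. (m, b) \<in> set \<sigma>) else b)"
    have b'o: "b' \<in> out N m"
    proof (cases "\<exists>b. (m, b) \<in> set \<sigma>")
      case True
      then have "(m, b') \<in> set \<sigma>" unfolding b'_def using someI_ex[of "\<lambda>b. (m, b) \<in> set \<sigma>"] by simp
      then show ?thesis using sig_out by auto
    next
      case False
      then show ?thesis using s unfolding b'_def step_def by simp
    qed
    have b'c: "\<And>b''. (m, b'') \<in> set \<sigma> \<Longrightarrow> b'' = b'"
    proof -
      fix b'' assume h: "(m, b'') \<in> set \<sigma>"
      then have "(m, b') \<in> set \<sigma>" unfolding b'_def by (auto intro: someI)
      then show "b'' = b'" using h sig_d eq_key_imp_eq_value by metis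
    qed
    define C2 where "C2 = (\<lambda>p. if p \<in> dm N m then delta N m b' p else C p)"
    have s2: "step N C m b' C2" using s b'o unfolding step_def C2_def by simp
    have r2: "runs N (C_init N) (es @ [(m, b')]) C2" unfolding runs_snoc using less.prems s2 by blast
    have rM: "runs M (C_init M) (es @ [(m, b')]) (proj C2)" using proj_runs[OF r2] proj_init by simp
    have gi: "detneg.good M (C_init M)" using detneg.good_init[OF detM] .
    have dis: "distinct (map fst (es @ [(m, b')]))" using detneg.distinct_runs[OF detM rM gi] .
    have sub: "set (map fst (es @ [(m, b')])) \<subseteq> Nodes N"
      using runs_mem[OF rM] M_Nodes by fastforce
    have "length (es @ [(m, b')]) \<le> card (Nodes N)"
      using card_mono[OF _ sub] distinct_card[OF dis] negD(2)[OF neg] by auto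
    then have lt: "card (Nodes N) - length (es @ [(m, b')]) < card (Nodes N) - length es" by simp
    obtain es' where es': "runs N C2 es' (C_fin N)" "cons \<sigma> es'"
      using less.hyps[OF lt r2] by blast
    have "runs N C ((m, b') # es') (C_fin N)" using s2 es'(1) by (rule runs.rCons)
    moreover have "cons \<sigma> ((m, b') # es')" using es'(2) b'c unfolding cons_def by auto
    ultimately show ?thesis by blast
  qed
qed

lemma main: "sound M"
  unfolding sound_def
proof (intro allI impI)
  fix C assume "reach M (C_init M) C"
  then obtain \<sigma> where rs: "runs M (C_init M) \<sigma> C" using reach_runs by blast
  have gi: "detneg.good M (C_init M)" using detneg.good_init[OF detM] .
  have ds: "distinct (map fst \<sigma>)" using detneg.distinct_runs[OF detM rs gi] .
  have so: "\<forall>(m, b)\<in>set \<sigma>. b \<in> out N m" using runs_mem[OF rs] M_simps by auto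
  obtain \<tau> where t: "runs N (C_init N) \<tau> (C_fin N)" "cons \<sigma> \<tau>"
    using lemma_A[OF so ds runs.rNil] by blast
  have tM: "runs M (C_init M) \<tau> (C_fin M)" using proj_runs[OF t(1)] proj_init proj_fin by simp
  have of: "out M (nfin M) = {}" using out_fin M_simps by simp
  have "set \<sigma> \<subseteq> set \<tau>" using detneg.lemma_B[OF detM rs tM t(2) of] .
  then show "reach M C (C_fin M)" using detneg.lemma_L[OF detM rs tM gi] by blast
qed

end

theorem lemma4p9:
  fixes \<N> :: "('p, 'n, 'r) negotiation"
  assumes "is_negotiation \<N>"
    and "sound \<N>"
    and "acyclic_neg \<N>"
    and "weakly_nondet \<N>"
  shows "sound (restrict_D \<N>)"
  using sndneg.main[OF sndneg.intro[OF assms]] .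

end
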